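(* Let $m/n\in(0,1/2)$. Then the set $\mathcal A_{m/n}$ of $m/n$-admissible integers has the same cardinality as the left Farey sequence $\mathrm{LFS}(m/n)$.
   Context: Rationals in lowest terms. For $h/k\in(0,1/2)$, $\mathrm{LFP}(h/k)$ is the element immediately preceding $h/k$ in the increasing list of rationals in $[0,1/2]$ with denominator at most $k$. $\mathrm{LFS}(m/n)=(0=u_1/v_1,u_2/v_2,\dots,u_\alpha/v_\alpha)$ where $u_\alpha/v_\alpha=\mathrm{LFP}(m/n)$ and $u_i/v_i=\mathrm{LFP}(u_{i+1}/v_{i+1})$ for $1\le i<\alpha$. $+_n$ is addition mod $n$; $\mathcal O_{m/n}[r,s]=\{r+_njm\colon0\le j\le K\}$ with $K\ge0$ least such that $r+_nKm=s$. An integer $k\in[0,m-1]$ is $m/n$-admissible if $\{k+1,\dots,m-1\}\cap\mathcal O_{m/n}[k,0]=\emptyset$. *)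

theory Defs
  imports Complex_Main
begin

definition denom :: "rat \<Rightarrow> int" where
  "denom r = snd (quotient_of r)"

definition LFP :: "rat \<Rightarrow> rat" where
  "LFP q = Max {r. 0 \<le> r \<and> r \<le> 1/2 \<and> r < q \<and> denom r \<le> denom q}"

text \<open>The (set of entries of the) left Farey sequence LFS(q):
LFP(q) belongs to it, and LFP(u) belongs to it for every nonzero entry u;
the chain stops at 0.\<close>
inductive_set LFS :: "rat \<Rightarrow> rat set" for q :: rat where
  first: "LFP q \<in> LFS q"
| step: "u \<in> LFS q \<Longrightarrow> 0 < u \<Longrightarrow> LFP u \<in> LFS q"

definition orbit :: "nat \<Rightarrow> nat \<Rightarrow> nat \<Rightarrow> nat \<Rightarrow> nat set" where
  "orbit m n r s =
     (let K = (LEAST K. (r + K * m) mod n = s) in {(r + j * m) mod n | j. j \<le> K})"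

definition admissible :: "nat \<Rightarrow> nat \<Rightarrow> nat \<Rightarrow> bool" where
  "admissible m n k \<longleftrightarrow> k \<le> m - 1 \<and> {k+1..m-1} \<inter> orbit m n k 0 = {}"

definition admissible_set :: "nat \<Rightarrow> nat \<Rightarrow> nat set" where
  "admissible_set m n = {k. admissible m n k}"

end

theory Submission
  imports Defs "HOL-Number_Theory.Cong"
begin


lemma denom_frac:
  assumes "q > 0" "coprime p q"
  shows "denom (of_int p / of_int q) = q"
  using assms by (simp add: denom_def Fract_of_int_quotient[symmetric] quotient_of_Fract)

lemma denom_frac_nat:
  assumes "q > 0" "coprime p q"
  shows "denom (of_nat p / of_nat q) = int q"
  using denom_frac[of "int q" "int p"] assms by simp

lemma LFP_set_finite:
  "finite {r. 0 \<le> r \<and> r \<le> 1/2 \<and> r < u \<and> denom r \<le> denom u}"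
proof -
  let ?D = "denom u"
  have "{r. 0 \<le> r \<and> r \<le> 1/2 \<and> r < u \<and> denom r \<le> denom u} \<subseteq>
        (\<lambda>(p,d). (of_int p / of_int d :: rat)) ` ({0..?D} \<times> {1..?D})"
  proof
    fix r assume r: "r \<in> {r. 0 \<le> r \<and> r \<le> 1/2 \<and> r < u \<and> denom r \<le> denom u}"
    obtain p d where pd: "quotient_of r = (p, d)" by (cases "quotient_of r")
    have d: "d > 0" using quotient_of_denom_pos[OF pd] .
    have req: "r = of_int p / of_int d" using quotient_of_div[OF pd] .
    have dd: "d \<le> ?D" using r pd by (simp add: denom_def)
    have "0 \<le> of_int p / (of_int d :: rat)" using r req by simp
    hence p0: "0 \<le> p" using d by (simp add: zero_le_divide_iff)
    have "r \<le> 1" using r by simp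
    hence "of_int p / (of_int d :: rat) \<le> 1" using req by simp
    hence "p \<le> d" using d by (simp add: divide_le_eq_1)
    then show "r \<in> (\<lambda>(p,d). (of_int p / of_int d :: rat)) ` ({0..?D} \<times> {1..?D})"
      using p0 d dd req by (auto intro!: image_eqI[of _ _ "(p,d)"])
  qed
  then show ?thesis by (rule finite_subset) auto
qed

lemma LFP_mem:
  assumes "0 < u"
  shows "0 \<le> LFP u \<and> LFP u \<le> 1/2 \<and> LFP u < u \<and> denom (LFP u) \<le> denom u"
proof -
  have "0 \<in> {r. 0 \<le> r \<and> r \<le> 1/2 \<and> r < u \<and> denom r \<le> denom u}"
    using assms quotient_of_denom_pos'[of u] by (simp add: denom_def)
  then have "Max {r. 0 \<le> r \<and> r \<le> 1/2 \<and> r < u \<and> denom r \<le> denom u}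
     \<in> {r. 0 \<le> r \<and> r \<le> 1/2 \<and> r < u \<and> denom r \<le> denom u}"
    using LFP_set_finite by (intro Max_in) auto
  then show ?thesis unfolding LFP_def by simp
qed

lemma LFP_char:
  fixes m n a b :: nat
  assumes cop: "coprime m n" and m0: "0 < m" and mn: "2 * m < n"
    and ab: "b * m = a * n + 1" and b0: "0 < b" and bn: "b \<le> n"
  shows "LFP (of_nat m / of_nat n) = of_nat a / of_nat b"
proof -
  let ?q = "of_nat m / of_nat n :: rat"
  let ?S = "{r. 0 \<le> r \<and> r \<le> 1/2 \<and> r < ?q \<and> denom r \<le> denom ?q}"
  have n0: "n > 0" using mn by simp
  have dq: "denom ?q = int n" using denom_frac_nat[of n m] n0 cop by (simp add: coprime_commute)
  have copab: "coprime a b"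
  proof -
    have "gcd a b dvd 1" using ab
      by (metis dvd_add_right_iff dvd_mult gcd_dvd1 gcd_dvd2 mult.commute)
    then show ?thesis by (simp add: coprime_iff_gcd_eq_1)
  qed
  have lt: "of_nat a / of_nat b < ?q"
  proof -
    have "a * n < b * m" using ab by simp
    hence "(of_nat a :: rat) * of_nat n < of_nat m * of_nat b"
      by (metis mult.commute of_nat_less_iff of_nat_mult)
    then show ?thesis using n0 b0 by (simp add: frac_less_eq field_simps)
  qed
  have qhalf: "?q < 1/2" using mn n0 by (simp add: field_simps)
  have "of_nat a / of_nat b \<le> (1/2::rat)" using lt qhalf by linarith
  then have mem: "of_nat a / of_nat b \<in> ?S"
    using lt dq denom_frac_nat[of b a] b0 copab bn by auto
  have upper: "r \<le> of_nat a / of_nat b" if r: "r \<in> ?S" for r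
  proof (rule ccontr)
    assume "\<not> r \<le> of_nat a / of_nat b"
    hence gt: "of_nat a / of_nat b < r" by simp
    obtain p d where pd: "quotient_of r = (p, d)" by (cases "quotient_of r")
    have d: "d > 0" using quotient_of_denom_pos[OF pd] .
    have req: "r = of_int p / of_int d" using quotient_of_div[OF pd] .
    have dd: "d \<le> int n" using r pd dq by (simp add: denom_def)
    have "of_int (int a) / of_int (int b) < (of_int p / of_int d :: rat)" using gt req by simp
    hence "of_int (int a * d) < (of_int (p * int b) :: rat)" using d b0
      by (simp add: frac_less_eq field_simps)
    hence i1: "int a * d < p * int b" by linarith
    have "(of_int p / of_int d :: rat) < of_int (int m) / of_int (int n)" using r req by simp
    hence "of_int (p * int n) < (of_int (int m * d) :: rat)" using d n0
      by (simp add: frac_less_eq field_simps)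
    hence i2: "p * int n < int m * d" by linarith
    have e: "int b * int m = int a * int n + 1" using ab by (metis of_nat_add of_nat_mult of_nat_1)
    have "int n * (p * int b - int a * d) + int b * (int m * d - p * int n) = d * (int b * int m - int a * int n)"
      by (simp add: algebra_simps)
    also have "\<dots> = d" using e by simp
    finally have eq: "int n * (p * int b - int a * d) + int b * (int m * d - p * int n) = d" .
    have "int n * (p * int b - int a * d) \<ge> int n" using i1 n0 by simp
    moreover have "int b * (int m * d - p * int n) \<ge> int b" using i2 b0 by simp
    ultimately have "d \<ge> int n + int b" using eq by linarith
    then show False using dd b0 by simp
  qed
  show ?thesis unfolding LFP_def
    using mem upper LFP_set_finite by (intro Max_eqI) auto
qed


function F :: "int \<Rightarrow> int \<Rightarrow> nat" where
  "F a m = (if a \<le> 0 then 0 else Suc (F ((- m) mod a) a))"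
  by auto
termination by (relation "measure (\<lambda>(a,m). nat a)") auto

declare F.simps[simp del]

lemma LFS_zero:
  assumes "LFP q = 0" shows "LFS q = {0}"
proof -
  have "x = 0" if "x \<in> LFS q" for x
    using that by induction (use assms in auto)
  moreover have "0 \<in> LFS q" using LFS.first[of q] assms by simp
  ultimately show ?thesis by auto
qed

lemma LFS_sub:
  assumes "p \<in> LFS q" "0 < p" shows "LFS p \<subseteq> LFS q"
proof
  fix x assume "x \<in> LFS p"
  then show "x \<in> LFS q"
  proof induction
    case first then show ?case using assms LFS.step by blast
  next
    case (step u) then show ?case using LFS.step by blast
  qed
qed

lemma LFS_pos:
  assumes "0 < LFP q" shows "LFS q = insert (LFP q) (LFS (LFP q))"
proof
  show "LFS q \<subseteq> insert (LFP q) (LFS (LFP q))"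
  proof
    fix x assume "x \<in> LFS q"
    then show "x \<in> insert (LFP q) (LFS (LFP q))"
    proof induction
      case first then show ?case by simp
    next
      case (step u) then show ?case using LFS.first LFS.step by auto
    qed
  qed
next
  show "insert (LFP q) (LFS (LFP q)) \<subseteq> LFS q"
    using LFS.first[of q] LFS_sub[OF LFS.first assms] by auto
qed

lemma LFS_less:
  assumes "0 < p" "x \<in> LFS p" shows "x < p"
  using assms(2)
proof induction
  case first then show ?case using LFP_mem[OF assms(1)] by simp
next
  case (step u) then show ?case using LFP_mem[of u] by auto
qed

lemma exists_ab:
  fixes m n :: nat
  assumes cop: "coprime m n" and n: "1 < n"
  shows "\<exists>a b. b * m = a * n + 1 \<and> 0 < b \<and> b \<le> n"
proof -
  obtain x where x: "[m * x = Suc 0] (mod n)" using cong_solve_coprime_nat[OF cop] by blast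
  define b where "b = x mod n"
  have bm: "(b * m) mod n = 1"
    using x n unfolding b_def cong_def by (metis mod_mult_left_eq mult.commute mod_less One_nat_def)
  have "b \<noteq> 0"
  proof
    assume "b = 0" with bm show False by simp
  qed
  moreover have "b \<le> n" using n by (simp add: b_def less_imp_le)
  moreover have "b * m = (b * m div n) * n + 1" using bm
    by (metis div_mult_mod_eq)
  ultimately show ?thesis by blast
qed

lemma LFS_card:
  "\<forall>n a b. coprime m n \<and> 0 < m \<and> 2 * m < n \<and> b * m = a * n + 1 \<and> 0 < b \<and> b \<le> n
    \<longrightarrow> finite (LFS (of_nat m / of_nat n)) \<and> card (LFS (of_nat m / of_nat n)) = Suc (F (int a) (int m))"
proof (induction m rule: less_induct)
  case (less m)
  show ?case
  proof (intro allI impI)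
    fix n a b
    assume H: "coprime m n \<and> 0 < m \<and> 2 * m < n \<and> b * m = a * n + 1 \<and> 0 < b \<and> b \<le> n"
    then have cop: "coprime m n" and m0: "0 < m" and mn: "2 * m < n" and ab: "b * m = a * n + 1"
      and b0: "0 < b" and bn: "b \<le> n" by auto
    have L: "LFP (of_nat m / of_nat n) = of_nat a / of_nat b" using LFP_char[OF cop m0 mn ab b0 bn] .
    show "finite (LFS (of_nat m / of_nat n)) \<and> card (LFS (of_nat m / of_nat n)) = Suc (F (int a) (int m))"
    proof (cases "a = 0")
      case True
      then have "LFS (of_nat m / of_nat n) = {0}" using L LFS_zero by simp
      then show ?thesis using True by (simp add: F.simps)
    next
      case False
      have copab: "coprime a b"
      proof -
        have "gcd a b dvd 1" using ab
          by (metis dvd_add_right_iff dvd_mult gcd_dvd1 gcd_dvd2 mult.commute)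
        then show ?thesis by (simp add: coprime_iff_gcd_eq_1)
      qed
      have a0: "0 < a" using False by simp
      have "a * n < n * m" using ab bn
        by (metis add_lessD1 less_add_one mult.commute mult_le_mono1 order_less_le_trans)
      then have am: "a < m" by simp
      have "2 * a * n < 2 * b * m" using ab by simp
      also have "\<dots> \<le> b * n" using mn by simp
      finally have ab2: "2 * a < b" by simp
      have b1: "1 < b" using ab2 a0 by linarith
      obtain a2 b2 where ab2e: "b2 * a = a2 * b + 1" and b20: "0 < b2" and b2b: "b2 \<le> b"
        using exists_ab[OF copab b1] by blast
      have IH: "finite (LFS (of_nat a / of_nat b)) \<and> card (LFS (of_nat a / of_nat b)) = Suc (F (int a2) (int a))"
        using less.IH[OF am, rule_format, of b b2 a2] copab a0 ab2 ab2e b20 b2b by simp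
      have pos: "(0::rat) < of_nat a / of_nat b" using a0 b0 by simp
      have eqs: "LFS (of_nat m / of_nat n) = insert (of_nat a / of_nat b) (LFS (of_nat a / of_nat b))"
        using LFS_pos[of "of_nat m / of_nat n"] L pos by simp
      have notin: "of_nat a / of_nat b \<notin> LFS (of_nat a / of_nat b)"
        using LFS_less[OF pos] by blast
      have a2: "int a2 = (- int m) mod int a"
      proof -
        have e1: "int b * int m = int a * int n + 1" using ab by (metis of_nat_add of_nat_mult of_nat_1)
        have e2: "int b2 * int a = int a2 * int b + 1" using ab2e by (metis of_nat_add of_nat_mult of_nat_1)
        have "int b * (int a2 + int m) = int a * (int b2 + int n)" using e1 e2 by (simp add: algebra_simps)
        then have "int a dvd int b * (int a2 + int m)" by simp
        moreover have "coprime (int a) (int b)" using copab by simp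
        ultimately have "int a dvd (int a2 + int m)" using coprime_dvd_mult_right_iff by blast
        then have "(int a2 + int m) mod int a = 0" by simp
        then have X: "(int a2 + int m) mod int a = 0" .
        have "int a2 mod int a = ((int a2 + int m) + (- int m)) mod int a" by simp
        also have "\<dots> = ((int a2 + int m) mod int a + (- int m)) mod int a" by (simp only: mod_add_left_eq)
        also have "\<dots> = (- int m) mod int a" using X by simp
        finally have "int a2 mod int a = (- int m) mod int a" .
        moreover have "int a2 mod int a = int a2"
        proof -
          have "a2 * b < b2 * a" using ab2e by simp
          also have "\<dots> \<le> b * a" using b2b by simp
          finally have "a2 < a" by simp
          then show ?thesis by simp
        qed
        ultimately show ?thesis by simp
      qed
      have "F (int a) (int m) = Suc (F (int a2) (int a))"
        using a0 a2 by (simp add: F.simps[of "int a"])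
      then show ?thesis using IH eqs notin by simp
    qed
  qed
qed


definition Pset :: "int \<Rightarrow> int \<Rightarrow> int set" where
  "Pset c M = {z. 1 \<le> z \<and> z \<le> M - 1 \<and> (\<forall>z'. 1 \<le> z' \<and> z' < z \<longrightarrow> (z*c) mod M < (z'*c) mod M)}"

lemma Pset_finite: "finite (Pset c M)"
  by (rule finite_subset[of _ "{1..M-1}"]) (auto simp: Pset_def)

lemma Pset_mod: "a > 0 \<Longrightarrow> Pset (c mod a) a = Pset c a"
  unfolding Pset_def by (simp add: mod_mult_right_eq)

lemma Pset_rec:
  fixes a M :: int
  assumes a1: "1 \<le> a" and aM: "a < M"
  shows "card (Pset a M) = Suc (card (Pset (- M) a))"
proof -
  define g where "g j = - ((j * (- M)) div a)" for j
  define v where "v j = (j * (- M)) mod a" for j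
  have v0: "0 \<le> v j" "v j < a" for j using a1 by (auto simp: v_def)
  have F1: "g j * a = j * M + v j" for j
  proof -
    define x where "x = j * (- M)"
    have h: "x div a * a + x mod a = x" by simp
    have "g j * a = - (x div a * a)" by (simp add: g_def x_def)
    also have "\<dots> = - x + x mod a" using h by linarith
    also have "\<dots> = j * M + v j" by (simp add: x_def v_def)
    finally show ?thesis .
  qed
  have F2: "1 \<le> g j" if "1 \<le> j" for j
  proof -
    have "g j * a \<ge> M" using F1[of j] v0[of j] that aM
      by (smt (verit) mult_le_cancel_right1)
    then show ?thesis using aM a1 by (smt (verit) mult_le_cancel_right1)
  qed
  have F2': "1 < g j" if "1 \<le> j" for j
  proof -
    have "g j * a \<ge> M" using F1[of j] v0[of j] that aM
      by (smt (verit) mult_le_cancel_right1)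
    then have "g j * a > 1 * a" using aM by simp
    then show ?thesis using a1 by (simp add: mult_less_cancel_right)
  qed
  have F3: "g j \<le> M - 1" if "j \<le> a - 1" for j
  proof -
    have "g j * a < M * a"
    proof -
      have "j * M \<le> (a - 1) * M" using that aM a1 by (simp add: mult_right_mono)
      then show ?thesis using F1[of j] v0[of j] aM by (simp add: algebra_simps)
    qed
    then have "g j < M" using a1 by (simp add: mult_less_cancel_right)
    then show ?thesis by simp
  qed
  have F4: "(g j * a) mod M = v j" for j
  proof -
    have "(j * M + v j) mod M = v j mod M" by simp
    also have "\<dots> = v j" using v0[of j] aM by simp
    finally show ?thesis using F1 by simp
  qed
  have F6: "g j < g j'" if "j < j'" for j j'
  proof -
    have "g j * a < j * M + M" using F1[of j] v0[of j] aM by simp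
    also have "\<dots> \<le> j' * M"
    proof -
      have "(j + 1) * M \<le> j' * M" using that aM a1 by (intro mult_right_mono) auto
      then show ?thesis by (simp add: algebra_simps)
    qed
    also have "\<dots> \<le> g j' * a" using F1[of j'] v0[of j'] by simp
    finally show ?thesis using a1 by (simp add: mult_less_cancel_right)
  qed
  have F6': "j < j'" if "g j < g j'" for j j'
  proof (rule ccontr)
    assume "\<not> j < j'"
    then have "j' < j \<or> j' = j" by auto
    then show False using F6[of j' j] that by auto
  qed
  have F5: "1 \<le> z * a div M \<and> z * a div M \<le> a - 1 \<and> g (z * a div M) = z"
    if z: "1 \<le> z" "z \<le> M - 1" "(z * a) mod M < a" for z
  proof -
    define j where "j = z * a div M"
    define w where "w = z * a mod M"
    have zj: "z * a = j * M + w" unfolding j_def w_def by simp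
    have w0: "0 \<le> w" "w < a" using z aM by (auto simp: w_def)
    have "z * a \<ge> a" using z a1 by simp
    then have j1: "1 \<le> j"
    proof -
      have "j \<ge> 0" unfolding j_def using z a1 aM by (simp add: pos_imp_zdiv_nonneg_iff)
      moreover have "j \<noteq> 0" using zj w0 \<open>z * a \<ge> a\<close> by auto
      ultimately show ?thesis by simp
    qed
    have ja: "j \<le> a - 1"
    proof -
      have "z * a < M * a" using z a1 by (simp add: mult_strict_right_mono)
      moreover have "j * M \<le> z * a" using zj w0 by linarith
      ultimately have "j * M < M * a" by linarith
      then have "j * M < a * M" by (simp add: mult.commute)
      then have "j < a" using aM a1 by (simp add: mult_less_cancel_right)
      then show ?thesis by simp
    qed
    have "v j = w"
    proof -
      have "j * (- M) = w + a * (- z)" using zj by (simp add: algebra_simps)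
      then have "v j = (w + a * (- z)) mod a" by (simp add: v_def)
      also have "\<dots> = w mod a" by (rule mod_mult_self2)
      also have "\<dots> = w" using w0 by simp
      finally show ?thesis .
    qed
    then have "g j * a = z * a" using F1[of j] zj by simp
    then have "g j = z" using a1 by simp
    then show ?thesis using j1 ja unfolding j_def by simp
  qed
  have EQ: "Pset a M = insert 1 (g ` Pset (- M) a)"
  proof (rule set_eqI, rule iffI)
    fix z assume zP: "z \<in> Pset a M"
    show "z \<in> insert 1 (g ` Pset (- M) a)"
    proof (cases "z = 1")
      case True then show ?thesis by simp
    next
      case False
      have zr: "1 \<le> z" "z \<le> M - 1" and rec: "\<And>z'. 1 \<le> z' \<Longrightarrow> z' < z \<Longrightarrow> (z*a) mod M < (z'*a) mod M"
        using zP by (auto simp: Pset_def)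
      have "(z*a) mod M < (1*a) mod M" using rec[of 1] zr False by simp
      then have za: "(z*a) mod M < a" using aM a1 by simp
      define j where "j = z * a div M"
      have j: "1 \<le> j" "j \<le> a - 1" "g j = z" using F5[OF zr za] unfolding j_def by auto
      have "j \<in> Pset (- M) a"
        unfolding Pset_def
      proof (intro CollectI conjI allI impI)
        show "1 \<le> j" "j \<le> a - 1" using j by auto
        fix j' assume j': "1 \<le> j' \<and> j' < j"
        have "(g j * a) mod M < (g j' * a) mod M"
          using rec[of "g j'"] F2[of j'] F6[of j' j] j' j by auto
        then show "j * - M mod a < j' * - M mod a" using F4 by (simp add: v_def)
      qed
      then show ?thesis using j by auto
    qed
  next
    fix z assume "z \<in> insert 1 (g ` Pset (- M) a)"
    then show "z \<in> Pset a M"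
    proof
      assume "z = 1" then show ?thesis using aM a1 by (auto simp: Pset_def)
    next
      assume "z \<in> g ` Pset (- M) a"
      then obtain j where jP: "j \<in> Pset (- M) a" and zj: "z = g j" by auto
      have jr: "1 \<le> j" "j \<le> a - 1" and jrec: "\<And>j'. 1 \<le> j' \<Longrightarrow> j' < j \<Longrightarrow> v j < v j'"
        using jP by (auto simp: Pset_def v_def)
      show ?thesis unfolding Pset_def
      proof (intro CollectI conjI allI impI)
        show "1 \<le> z" "z \<le> M - 1" using F2 F3 jr zj by auto
        fix z' assume z': "1 \<le> z' \<and> z' < z"
        show "z * a mod M < z' * a mod M"
        proof (cases "(z' * a) mod M < a")
          case False
          then show ?thesis using F4[of j] v0[of j] zj by simp
        next
          case True
          have z'M: "z' \<le> M - 1" using z' F3[of j] jr zj by simp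
          define j' where "j' = z' * a div M"
          have j': "1 \<le> j'" "g j' = z'" using F5[of z'] z' z'M True unfolding j'_def by auto
          have "j' < j" using F6'[of j' j] j' z' zj by simp
          then have "v j < v j'" using jrec j' by simp
          then show ?thesis using F4[of j] F4[of j'] zj j' by simp
        qed
      qed
    qed
  qed
  have notin: "1 \<notin> g ` Pset (- M) a"
  proof
    assume "1 \<in> g ` Pset (- M) a"
    then obtain x where "x \<in> Pset (- M) a" "g x = 1" by auto
    then have "1 \<le> x" "g x = 1" by (auto simp: Pset_def)
    then show False using F2'[of x] by simp
  qed
  have inj: "inj_on g (Pset (- M) a)"
    by (rule inj_onI) (metis F6 not_less_iff_gr_or_eq)
  show ?thesis
    unfolding EQ using notin inj Pset_finite by (simp add: card_image)
qed

lemma Pset_F: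
  "coprime a M \<Longrightarrow> 0 \<le> a \<Longrightarrow> a < M \<Longrightarrow> card (Pset a M) = F a M"
proof (induction a M rule: F.induct)
  case (1 a M)
  show ?case
  proof (cases "a \<le> 0")
    case True
    then have a0: "a = 0" using 1 by simp
    then have "M = 1" using 1 by simp
    then have "Pset a M = {}" by (auto simp: Pset_def)
    then show ?thesis using True by (simp add: F.simps)
  next
    case False
    have c: "coprime ((- M) mod a) a" using 1(2) False
      by (simp add: coprime_commute)
    have IH: "card (Pset ((- M) mod a) a) = F ((- M) mod a) a"
      using 1(1)[OF False c] False by simp
    have "card (Pset a M) = Suc (card (Pset (- M) a))"
      using Pset_rec[of a M] False 1 by simp
    also have "\<dots> = Suc (card (Pset ((- M) mod a) a))" using Pset_mod[of a "- M"] False by simp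
    also have "\<dots> = Suc (F ((- M) mod a) a)" using IH by simp
    also have "\<dots> = F a M" using False by (simp add: F.simps[of a M])
    finally show ?thesis .
  qed
qed


lemma orbit_mem:
  fixes m n a b k y :: nat
  assumes ab: "b * m = a * n + 1" and cbn: "coprime b n"
    and k: "0 < k" "k < n" and y: "0 < y" "y < n"
  shows "y \<in> orbit m n k 0 \<longleftrightarrow> (k * b) mod n \<le> (y * b) mod n"
proof -
  define u where "u = (k * b) mod n"
  define v where "v = (y * b) mod n"
  have n0: "0 < n" using k by simp
  have u0: "u \<noteq> 0"
  proof
    assume "u = 0"
    then have "n dvd k * b" by (simp add: u_def mod_eq_0_iff_dvd)
    then have "n dvd k" using cbn by (simp add: coprime_commute coprime_dvd_mult_left_iff)
    then show False using k by (auto dest: dvd_imp_le)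
  qed
  have v0: "v \<noteq> 0"
  proof
    assume "v = 0"
    then have "n dvd y * b" by (simp add: v_def mod_eq_0_iff_dvd)
    then have "n dvd y" using cbn by (simp add: coprime_commute coprime_dvd_mult_left_iff)
    then show False using y by (auto dest: dvd_imp_le)
  qed
  have un: "u < n" "v < n" using n0 by (auto simp: u_def v_def)
  have kb: "k * b = n * (k * b div n) + u" by (simp add: u_def)
  have key: "(k + j * m) * b = n * (k * b div n + j * a) + (u + j)" for j
  proof -
    have "(k + j * m) * b = k * b + j * (b * m)" by (simp add: algebra_simps)
    also have "\<dots> = k * b + j * (a * n) + j" using ab by simp
    also have "\<dots> = n * (k * b div n + j * a) + (u + j)" using kb by (simp add: algebra_simps)
    finally show ?thesis .
  qed
  have keymod: "((k + j * m) * b) mod n = (u + j) mod n" for j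
    using key[of j] by simp
  have cancel: "(k + j * m) mod n = y \<longleftrightarrow> (u + j) mod n = v" for j
  proof -
    have "(k + j * m) mod n = y \<longleftrightarrow> [k + j * m = y] (mod n)" using y by (simp add: cong_def)
    also have "\<dots> \<longleftrightarrow> [(k + j * m) * b = y * b] (mod n)" using cbn by (simp add: cong_mult_rcancel_nat)
    also have "\<dots> \<longleftrightarrow> (u + j) mod n = v" by (simp add: cong_def keymod v_def)
    finally show ?thesis .
  qed
  have LK: "(LEAST K. (k + K * m) mod n = 0) = n - u"
  proof (rule Least_equality)
    have "n dvd (k + (n - u) * m) * b"
      using key[of "n - u"] un by simp
    then have "n dvd (k + (n - u) * m)" using cbn by (simp add: coprime_commute coprime_dvd_mult_left_iff)
    then show "(k + (n - u) * m) mod n = 0" by simp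
  next
    fix K assume "(k + K * m) mod n = 0"
    then have "n dvd (k + K * m)" by (simp add: mod_eq_0_iff_dvd)
    then have "n dvd (k + K * m) * b" by (rule dvd_mult2)
    then have "n dvd (u + K)" using key[of K] by (simp add: dvd_add_right_iff)
    moreover have "u + K > 0" using u0 by simp
    ultimately have "n \<le> u + K" by (simp add: dvd_imp_le)
    then show "n - u \<le> K" by simp
  qed
  have orb: "orbit m n k 0 = {(k + j * m) mod n | j. j \<le> n - u}"
    unfolding orbit_def Let_def LK by simp
  show ?thesis
  proof
    assume "y \<in> orbit m n k 0"
    then obtain j where j: "j \<le> n - u" "(k + j * m) mod n = y" using orb by auto
    then have e: "(u + j) mod n = v" using cancel by simp
    have "u + j \<noteq> n" using e v0 by auto
    then have "u + j < n" using j un by simp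
    then have "v = u + j" using e by simp
    then show "(k * b) mod n \<le> (y * b) mod n" by (simp add: u_def v_def)
  next
    assume "(k * b) mod n \<le> (y * b) mod n"
    then have uv: "u \<le> v" by (simp add: u_def v_def)
    have "(u + (v - u)) mod n = v" using uv un by simp
    then have "(k + (v - u) * m) mod n = y" using cancel by simp
    moreover have "v - u \<le> n - u" using un by simp
    ultimately show "y \<in> orbit m n k 0" using orb by auto
  qed
qed

lemma ybmod:
  fixes m n a b y :: nat
  assumes ab: "b * m = a * n + 1" and y: "y < m" and mn: "m < n"
  shows "m * ((y * b) mod n) = n * ((y * a) mod m) + y"
proof -
  define q where "q = y * a div m"
  define r where "r = y * a mod m"
  have m0: "0 < m" using y by simp
  have ya: "y * a = m * q + r" by (simp add: q_def r_def)
  have rm: "r < m" using m0 by (simp add: r_def)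
  have e: "m * (y * b) = m * (n * q) + (n * r + y)"
  proof -
    have "m * (y * b) = y * (b * m)" by (simp add: algebra_simps)
    also have "\<dots> = n * (y * a) + y" using ab by (simp add: algebra_simps)
    also have "\<dots> = m * (n * q) + (n * r + y)" using ya by (simp add: algebra_simps)
    finally show ?thesis .
  qed
  have "m dvd (n * r + y)" using e by (metis dvd_add_right_iff dvd_triv_left)
  then obtain t where t: "n * r + y = m * t" by blast
  have "n * r + y < n * m"
  proof -
    have "r + 1 \<le> m" using rm by simp
    then have "n * (r + 1) \<le> n * m" by (intro mult_le_mono2)
    then have "n * r + n \<le> n * m" by (simp add: algebra_simps)
    then show ?thesis using y mn by linarith
  qed
  then have tn: "t < n" using t by (simp add: mult.commute)
  have "m * (y * b) = m * (n * q + t)" using e t by (simp add: algebra_simps)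
  then have "y * b = n * q + t" using m0 by simp
  then have "(y * b) mod n = t" using tn by simp
  then show ?thesis using t by (simp add: r_def)
qed

lemma cmp_equiv:
  fixes m n a b y k :: nat
  assumes ab: "b * m = a * n + 1" and mn: "m < n" and ky: "k < y" "y < m"
  shows "(y * b) mod n < (k * b) mod n \<longleftrightarrow> (y * a) mod m < (k * a) mod m"
proof -
  have Y: "m * ((y * b) mod n) = n * ((y * a) mod m) + y" using ybmod[OF ab ky(2) mn] .
  have K: "m * ((k * b) mod n) = n * ((k * a) mod m) + k" using ybmod[OF ab _ mn] ky by simp
  have m0: "0 < m" using ky by simp
  have "(y * b) mod n < (k * b) mod n \<longleftrightarrow> m * ((y * b) mod n) < m * ((k * b) mod n)"
    using m0 by simp
  also have "\<dots> \<longleftrightarrow> n * ((y * a) mod m) + y < n * ((k * a) mod m) + k" using Y K by simp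
  also have "\<dots> \<longleftrightarrow> (y * a) mod m < (k * a) mod m"
  proof
    assume h: "n * ((y * a) mod m) + y < n * ((k * a) mod m) + k"
    show "(y * a) mod m < (k * a) mod m"
    proof (rule ccontr)
      assume "\<not> ?thesis"
      then have "n * ((k * a) mod m) \<le> n * ((y * a) mod m)" by simp
      then show False using h ky by linarith
    qed
  next
    assume "(y * a) mod m < (k * a) mod m"
    then have "n * ((y * a) mod m + 1) \<le> n * ((k * a) mod m)" by (intro mult_le_mono2) simp
    then show "n * ((y * a) mod m) + y < n * ((k * a) mod m) + k" using ky mn by simp
  qed
  finally show ?thesis .
qed


lemma rev_mod:
  fixes m a k :: nat
  assumes cam: "coprime a m" and k: "1 \<le> k" "k < m"
  shows "((int m - int k) * int a) mod int m = int m - int ((k * a) mod m)"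
proof -
  have nz: "(k * a) mod m \<noteq> 0"
  proof
    assume "(k * a) mod m = 0"
    then have "m dvd k * a" by (simp add: mod_eq_0_iff_dvd)
    then have "m dvd k" using cam by (simp add: coprime_commute coprime_dvd_mult_left_iff)
    then show False using k by (auto dest: dvd_imp_le)
  qed
  have e: "int (k * a) mod int m = int ((k * a) mod m)" by (rule zmod_int[symmetric])
  have nz': "int (k * a) mod int m \<noteq> 0" using nz by (simp only: e of_nat_eq_0_iff not_False_eq_True)
  have "((int m - int k) * int a) mod int m = (- int (k * a) + int a * int m) mod int m"
    by (simp add: algebra_simps)
  also have "\<dots> = (- int (k * a)) mod int m" by (rule mod_mult_self1)
  also have "\<dots> = int m - int (k * a) mod int m"
    by (simp only: zmod_zminus1_eq_if nz' if_False)
  also have "\<dots> = int m - int ((k * a) mod m)" by (simp only: e)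
  finally show ?thesis .
qed

lemma adm_card:
  fixes m n a b :: nat
  assumes cop: "coprime m n" and m0: "0 < m" and mn: "m < n"
    and ab: "b * m = a * n + 1" and b0: "0 < b" and bn: "b \<le> n"
  shows "card (admissible_set m n) = Suc (F (int a) (int m))"
proof -
  have cbn: "coprime b n"
  proof -
    have "gcd b n dvd 1" using ab
      by (metis dvd_add_right_iff dvd_mult dvd_mult2 gcd_dvd1 gcd_dvd2)
    then show ?thesis by (simp add: coprime_iff_gcd_eq_1)
  qed
  have cam: "coprime a m"
  proof -
    have "gcd a m dvd 1" using ab
      by (metis dvd_add_right_iff dvd_mult dvd_mult2 gcd_dvd1 gcd_dvd2)
    then show ?thesis by (simp add: coprime_iff_gcd_eq_1)
  qed
  have am: "a < m"
  proof -
    have "a * n < n * m" using ab bn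
      by (metis add_lessD1 less_add_one mult.commute mult_le_mono1 order_less_le_trans)
    then show ?thesis by simp
  qed
  define S where "S = {k. 1 \<le> k \<and> k \<le> m - 1 \<and> (\<forall>y. k < y \<and> y \<le> m - 1 \<longrightarrow> (y * a) mod m < (k * a) mod m)}"
  have adm0: "admissible m n 0"
  proof -
    have L: "(LEAST K. (0 + K * m) mod n = 0) = 0" by (rule Least_eq_0) simp
    have "orbit m n 0 0 = {0}" unfolding orbit_def Let_def L by auto
    then show ?thesis unfolding admissible_def by auto
  qed
  have admk: "admissible m n k \<longleftrightarrow> k \<in> S" if k: "1 \<le> k" "k \<le> m - 1" for k
  proof -
    have "admissible m n k \<longleftrightarrow> (\<forall>y. k < y \<and> y \<le> m - 1 \<longrightarrow> y \<notin> orbit m n k 0)"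
      unfolding admissible_def disjoint_iff atLeastAtMost_iff using k by (auto simp: Suc_le_eq)
    also have "\<dots> \<longleftrightarrow> (\<forall>y. k < y \<and> y \<le> m - 1 \<longrightarrow> (y * b) mod n < (k * b) mod n)"
    proof -
      have "y \<notin> orbit m n k 0 \<longleftrightarrow> (y * b) mod n < (k * b) mod n" if "k < y" "y \<le> m - 1" for y
        using orbit_mem[OF ab cbn, of k y] that k mn by auto
      then show ?thesis by auto
    qed
    also have "\<dots> \<longleftrightarrow> (\<forall>y. k < y \<and> y \<le> m - 1 \<longrightarrow> (y * a) mod m < (k * a) mod m)"
    proof -
      have "(y * b) mod n < (k * b) mod n \<longleftrightarrow> (y * a) mod m < (k * a) mod m" if "k < y" "y \<le> m - 1" for y
        using cmp_equiv[OF ab mn, of k y] that m0 by auto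
      then show ?thesis by auto
    qed
    finally show ?thesis using k by (simp add: S_def)
  qed
  have AS: "admissible_set m n = insert 0 S"
  proof (rule set_eqI)
    fix k
    show "k \<in> admissible_set m n \<longleftrightarrow> k \<in> insert 0 S"
    proof (cases "k = 0")
      case True then show ?thesis using adm0 by (simp add: admissible_set_def)
    next
      case False
      show ?thesis
      proof (cases "k \<le> m - 1")
        case True
        then show ?thesis using admk[of k] False by (simp add: admissible_set_def)
      next
        case False
        then show ?thesis by (simp add: admissible_set_def admissible_def S_def)
      qed
    qed
  qed
  have finS: "finite S" by (rule finite_subset[of _ "{1..m-1}"]) (auto simp: S_def)
  have "0 \<notin> S" by (simp add: S_def)
  then have c1: "card (admissible_set m n) = Suc (card S)" using AS finS by simp
  define h where "h k = int m - int k" for k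
  have PS: "Pset (int a) (int m) = h ` S"
  proof (rule set_eqI, rule iffI)
    fix z assume zP: "z \<in> Pset (int a) (int m)"
    have z: "1 \<le> z" "z \<le> int m - 1" and rec: "\<And>z'. 1 \<le> z' \<Longrightarrow> z' < z \<Longrightarrow> (z * int a) mod int m < (z' * int a) mod int m"
      using zP by (auto simp: Pset_def)
    define k where "k = nat (int m - z)"
    have k: "1 \<le> k" "k \<le> m - 1" "z = h k" using z by (auto simp: k_def h_def)
    have "k \<in> S" unfolding S_def
    proof (intro CollectI conjI allI impI)
      show "1 \<le> k" "k \<le> m - 1" using k by auto
      fix y assume y: "k < y \<and> y \<le> m - 1"
      have "(z * int a) mod int m < (h y * int a) mod int m"
        using rec[of "h y"] y k m0 by (auto simp: h_def)
      moreover have "1 \<le> y" "y < m" "k < m" using y k m0 by auto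
      ultimately have "int m - int ((k * a) mod m) < int m - int ((y * a) mod m)"
        using rev_mod[OF cam \<open>1 \<le> k\<close> \<open>k < m\<close>] rev_mod[OF cam \<open>1 \<le> y\<close> \<open>y < m\<close>] k(3) by (simp add: h_def)
      then show "(y * a) mod m < (k * a) mod m" by simp
    qed
    then show "z \<in> h ` S" using k by auto
  next
    fix z assume "z \<in> h ` S"
    then obtain k where kS: "k \<in> S" and zk: "z = h k" by auto
    have k: "1 \<le> k" "k \<le> m - 1" and rec: "\<And>y. k < y \<Longrightarrow> y \<le> m - 1 \<Longrightarrow> (y * a) mod m < (k * a) mod m"
      using kS by (auto simp: S_def)
    show "z \<in> Pset (int a) (int m)" unfolding Pset_def
    proof (intro CollectI conjI allI impI)
      show "1 \<le> z" "z \<le> int m - 1" using k m0 zk by (auto simp: h_def)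
      fix z' assume z': "1 \<le> z' \<and> z' < z"
      define y where "y = nat (int m - z')"
      have y: "k < y" "y \<le> m - 1" "z' = h y" using z' zk k by (auto simp: y_def h_def)
      have "(y * a) mod m < (k * a) mod m" using rec y by simp
      then have "int m - int ((k * a) mod m) < int m - int ((y * a) mod m)" by simp
      moreover have "1 \<le> y" "y < m" "k < m" using y k m0 by auto
      ultimately show "z * int a mod int m < z' * int a mod int m"
        using rev_mod[OF cam \<open>1 \<le> k\<close> \<open>k < m\<close>] rev_mod[OF cam \<open>1 \<le> y\<close> \<open>y < m\<close>] y(3) zk by (simp add: h_def)
    qed
  qed
  have "inj_on h S" by (rule inj_onI) (simp add: h_def)
  then have "card (Pset (int a) (int m)) = card S" using PS by (simp add: card_image)
  moreover have "card (Pset (int a) (int m)) = F (int a) (int m)"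
    using Pset_F[of "int a" "int m"] cam am by simp
  ultimately show ?thesis using c1 by simp
qed

theorem corollary2p20:
  fixes m n :: nat
  assumes "coprime m n" and "0 < m" and "2 * m < n"
  shows "card (admissible_set m n) = card (LFS (of_nat m / of_nat n))"
proof -
  have n1: "1 < n" using assms(2,3) by linarith
  obtain a b where ab: "b * m = a * n + 1" and b0: "0 < b" and bn: "b \<le> n"
    using exists_ab[OF assms(1) n1] by blast
  have "card (LFS (of_nat m / of_nat n)) = Suc (F (int a) (int m))"
    using LFS_card[of m] assms ab b0 bn by blast
  moreover have "card (admissible_set m n) = Suc (F (int a) (int m))"
    using adm_card[OF assms(1,2) _ ab b0 bn] assms(3) by simp
  ultimately show ?thesis by simp
qed

end
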